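(* Let $\Phi,\Psi$ be complementary $N$-functions both satisfying the $\Delta_2^0$-condition and let $\varphi=\{\varphi_k\}_{k=0}^\infty$, $\psi=\{\psi_k\}_{k=0}^\infty$ be weight sequences in $\mathcal{W}$. There exists a constant $C>0$ depending only on $\Phi,\Psi,\varphi,\psi$ such that for every $a\in W\cap F\ell_{\varphi,\psi}^{\Phi,\Psi}$, every $n\in\mathbb{N}$ and every $j\in\{0,\dots,n\}$, \[ \|Q_nT(a)\Delta_j\|_{\mathcal{B}(\ell^\Psi(\mathbb{Z}_+))}\le C\,\frac{\|a-a^{(n-j)}\|_{F\ell_{\varphi,\psi}^{\Phi,\Psi}}}{\psi_{n-j+1}}, \qquad \|\Delta_jT(a)Q_n\|_{\mathcal{B}(\ell^\Psi(\mathbb{Z}_+))}\le C\,\frac{\|a-a^{(n-j)}\|_{F\ell_{\varphi,\psi}^{\Phi,\Psi}}}{\varphi_{n-j+1}}. \]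
   Context: $\mathbb{T}$ is the unit circle; $f_k$ denote Fourier coefficients of $f\in L^1(\mathbb{T})$. $W$ is the Wiener algebra of $a(t)=\sum_ka_kt^k$ with $\sum_k|a_k|<\infty$. Complementary $N$-functions: for $p:[0,\infty)\to[0,\infty)$ right-continuous non-decreasing with $p(0)=0$, $p(t)>0$ for $t>0$, $p(t)\to\infty$, and $q(s)=\sup\{t:p(t)\le s\}$, set $\Phi(x)=\int_0^xp$, $\Psi(x)=\int_0^xq$. $\Delta_2^0$-condition: $\limsup_{x\to0}\Phi(2x)/\Phi(x)<\infty$. $\mathcal{W}$: sequences $\{\nu_k\}_{k\ge0}$ of positive numbers with $\nu_0=1$, non-decreasing, and $\nu_{2k}\le C_\nu\nu_k$ ($k\in\mathbb{N}$) for some constant $C_\nu$. For $\mathbb{I}\in\{\mathbb{N},\mathbb{Z}_+\}$, an $N$-function $\Theta$ and a weight sequence $w$, $\ell^\Theta_w(\mathbb{I})$ is the space of complex sequences $(c_k)_{k\in\mathbb{I}}$ with $\sum_k\Theta(|c_k|w_k/\lambda)<\infty$ for some $\lambda>0$, normed by $\|c\|=\inf\{\lambda>0:\sum_k\Theta(|c_k|w_k/\lambda)\le1\}$; $\ell^\Theta(\mathbb{I})$ is the case $w_k\equiv1$. $F\ell_{\varphi,\psi}^{\Phi,\Psi}$ is the set of $a\in L^1(\mathbb{T})$ with $\sum_{k\ge1}\Phi(|a_{-k}|\varphi_k)+\sum_{k\ge0}\Psi(|a_k|\psi_k)<\infty$, normed by $\|a\|_{F\ell_{\varphi,\psi}^{\Phi,\Psi}}=\|\{a_{-k}\}_{k\in\mathbb{N}}\|_{\ell^\Phi_\varphi(\mathbb{N})}+\|\{a_k\}_{k\in\mathbb{Z}_+}\|_{\ell^\Psi_\psi(\mathbb{Z}_+)}$.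 For $m\in\mathbb{Z}_+$, $a^{(m)}(t)=\sum_{k=-m}^ma_kt^k$. $T(a)$ is the Toeplitz operator on sequences $(c_k)_{k\ge0}$ with matrix $(a_{j-k})_{j,k\ge0}$. $P_n$ maps $(c_k)_{k\ge0}$ to $(c_0,\dots,c_n,0,0,\dots)$, $Q_n=I-P_n$, $\Delta_0=P_0$, $\Delta_j=P_j-P_{j-1}$. $\mathcal{B}(X)$ is the algebra of bounded operators on $X$ with the operator norm. *)

theory Defs
  imports "HOL-Analysis.Analysis" "HOL-Library.Liminf_Limsup"
begin

definition admissible_density :: "(real \<Rightarrow> real) \<Rightarrow> bool" where
  "admissible_density p \<longleftrightarrow>
     p 0 = 0 \<and>
     (\<forall>t>0. p t > 0) \<and>
     mono_on {0..} p \<and>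
     (\<forall>t\<ge>0. continuous (at_right t) p) \<and>
     filterlim p at_top at_top"

definition right_inverse :: "(real \<Rightarrow> real) \<Rightarrow> real \<Rightarrow> real" where
  "right_inverse p s = Sup {t. t \<ge> 0 \<and> p t \<le> s}"

definition Nfun_of :: "(real \<Rightarrow> real) \<Rightarrow> real \<Rightarrow> real" where
  "Nfun_of p x = integral {0..x} p"

definition complementary_Nfunctions ::
  "(real \<Rightarrow> real) \<Rightarrow> (real \<Rightarrow> real) \<Rightarrow> bool" where
  "complementary_Nfunctions \<Phi> \<Psi> \<longleftrightarrow>
     (\<exists>p. admissible_density p \<and> \<Phi> = Nfun_of p \<and> \<Psi> = Nfun_of (right_inverse p))"

definition Delta2_zero :: "(real \<Rightarrow> real) \<Rightarrow> bool" where
  "Delta2_zero \<Phi> \<longleftrightarrow> Limsup (at_right 0) (\<lambda>x. ereal (\<Phi> (2 * x) / \<Phi> x)) < \<infinity>"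

definition weight_class :: "(nat \<Rightarrow> real) \<Rightarrow> bool" where
  "weight_class \<nu> \<longleftrightarrow>
     (\<forall>k. \<nu> k > 0) \<and> \<nu> 0 = 1 \<and> mono \<nu> \<and>
     (\<exists>C. \<forall>k\<ge>1. \<nu> (2 * k) \<le> C * \<nu> k)"

definition orlicz_space ::
  "(real \<Rightarrow> real) \<Rightarrow> nat set \<Rightarrow> (nat \<Rightarrow> real) \<Rightarrow> (nat \<Rightarrow> complex) \<Rightarrow> bool" where
  "orlicz_space \<Theta> I w c \<longleftrightarrow>
     (\<exists>r>0. (\<lambda>k. \<Theta> (cmod (c k) * w k / r)) summable_on I)"

definition orlicz_norm ::
  "(real \<Rightarrow> real) \<Rightarrow> nat set \<Rightarrow> (nat \<Rightarrow> real) \<Rightarrow> (nat \<Rightarrow> complex) \<Rightarrow> real" where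
  "orlicz_norm \<Theta> I w c =
     Inf {r. r > 0 \<and> (\<lambda>k. \<Theta> (cmod (c k) * w k / r)) summable_on I \<and>
              (\<Sum>\<^sub>\<infinity>k\<in>I. \<Theta> (cmod (c k) * w k / r)) \<le> 1}"

abbreviation ellTheta :: "(real \<Rightarrow> real) \<Rightarrow> (nat \<Rightarrow> complex) \<Rightarrow> bool" where
  "ellTheta \<Theta> c \<equiv> orlicz_space \<Theta> UNIV (\<lambda>_. 1) c"

abbreviation ellTheta_norm :: "(real \<Rightarrow> real) \<Rightarrow> (nat \<Rightarrow> complex) \<Rightarrow> real" where
  "ellTheta_norm \<Theta> c \<equiv> orlicz_norm \<Theta> UNIV (\<lambda>_. 1) c"

definition wiener :: "(int \<Rightarrow> complex) \<Rightarrow> bool" where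
  "wiener a \<longleftrightarrow> (\<lambda>k. cmod (a k)) summable_on UNIV"

definition Fl_space ::
  "(real \<Rightarrow> real) \<Rightarrow> (real \<Rightarrow> real) \<Rightarrow> (nat \<Rightarrow> real) \<Rightarrow> (nat \<Rightarrow> real)
   \<Rightarrow> (int \<Rightarrow> complex) \<Rightarrow> bool" where
  "Fl_space \<Phi> \<Psi> \<phi> \<psi> a \<longleftrightarrow>
     (\<lambda>k. \<Phi> (cmod (a (- int k)) * \<phi> k)) summable_on {1..} \<and>
     (\<lambda>k. \<Psi> (cmod (a (int k)) * \<psi> k)) summable_on UNIV"

definition Fl_norm ::
  "(real \<Rightarrow> real) \<Rightarrow> (real \<Rightarrow> real) \<Rightarrow> (nat \<Rightarrow> real) \<Rightarrow> (nat \<Rightarrow> real)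
   \<Rightarrow> (int \<Rightarrow> complex) \<Rightarrow> real" where
  "Fl_norm \<Phi> \<Psi> \<phi> \<psi> a =
     orlicz_norm \<Phi> {1..} \<phi> (\<lambda>k. a (- int k)) + orlicz_norm \<Psi> UNIV \<psi> (\<lambda>k. a (int k))"

definition trunc_symbol :: "nat \<Rightarrow> (int \<Rightarrow> complex) \<Rightarrow> int \<Rightarrow> complex" where
  "trunc_symbol m a k = (if \<bar>k\<bar> \<le> int m then a k else 0)"

definition toeplitz :: "(int \<Rightarrow> complex) \<Rightarrow> (nat \<Rightarrow> complex) \<Rightarrow> nat \<Rightarrow> complex" where
  "toeplitz a c j = (\<Sum>k. a (int j - int k) * c k)"

definition Pn :: "nat \<Rightarrow> (nat \<Rightarrow> complex) \<Rightarrow> nat \<Rightarrow> complex" where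
  "Pn n c k = (if k \<le> n then c k else 0)"

definition Qn :: "nat \<Rightarrow> (nat \<Rightarrow> complex) \<Rightarrow> nat \<Rightarrow> complex" where
  "Qn n c = c - Pn n c"

definition Delta :: "nat \<Rightarrow> (nat \<Rightarrow> complex) \<Rightarrow> nat \<Rightarrow> complex" where
  "Delta j c = (if j = 0 then Pn 0 c else Pn j c - Pn (j - 1) c)"

end

theory Submission
  imports Defs
begin

lemma nf_int:
  fixes f :: "real \<Rightarrow> real"
  assumes "mono_on {0..} f" "0 \<le> a"
  shows "f integrable_on {a..b}"
  by (rule integrable_on_mono_on) (rule mono_on_subset[OF assms(1)], use assms(2) in auto)

lemma nf_split:
  fixes f :: "real \<Rightarrow> real"
  assumes "mono_on {0..} f" "0 \<le> y" "y \<le> x"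
  shows "Nfun_of f x = Nfun_of f y + integral {y..x} f"
  unfolding Nfun_of_def using Henstock_Kurzweil_Integration.integral_combine[OF assms(2,3) nf_int[OF assms(1), of 0 x]] by simp

lemma nf_nonneg0:
  fixes f :: "real \<Rightarrow> real"
  assumes "mono_on {0..} f" "\<And>x. x \<ge> 0 \<Longrightarrow> f x \<ge> 0" "0 \<le> y"
  shows "0 \<le> integral {y..x} f"
  by (rule integral_nonneg[OF nf_int[OF assms(1,3)]]) (use assms in auto)

lemma nf_lower:
  fixes f :: "real \<Rightarrow> real"
  assumes "mono_on {0..} f" "\<And>x. x \<ge> 0 \<Longrightarrow> f x \<ge> 0" "0 \<le> y" "y \<le> x"
  shows "(x - y) * f y \<le> Nfun_of f x"
proof -
  have "integral {y..x} (\<lambda>_. f y) \<le> integral {y..x} f"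
  proof (rule integral_le)
    show "f integrable_on {y..x}" by (rule nf_int[OF assms(1,3)])
    fix t assume "t \<in> {y..x}"
    then show "f y \<le> f t" using assms(3) by (intro mono_onD[OF assms(1)]) auto
  qed (rule integrable_const_ivl)
  moreover have "integral {y..x} (\<lambda>_. f y) = (x - y) * f y" using assms by simp
  moreover have "0 \<le> Nfun_of f y" unfolding Nfun_of_def by (rule nf_nonneg0[OF assms(1,2)]) auto
  ultimately show ?thesis using nf_split[OF assms(1,3,4)] by linarith
qed

lemma nf_upper:
  fixes f :: "real \<Rightarrow> real"
  assumes "mono_on {0..} f" "0 \<le> x"
  shows "Nfun_of f x \<le> x * f x"
proof -
  have "integral {0..x} f \<le> integral {0..x} (\<lambda>_. f x)"
    by (rule integral_le) (auto intro!: nf_int[OF assms(1)] mono_onD[OF assms(1)] simp: assms)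
  then show ?thesis using assms unfolding Nfun_of_def by simp
qed

lemma nf_nonneg:
  fixes f :: "real \<Rightarrow> real"
  assumes "mono_on {0..} f" "\<And>x. x \<ge> 0 \<Longrightarrow> f x \<ge> 0"
  shows "0 \<le> Nfun_of f x"
proof (cases "x \<ge> 0")
  case True show ?thesis unfolding Nfun_of_def by (rule nf_nonneg0[OF assms(1,2)]) auto
next
  case False then show ?thesis unfolding Nfun_of_def by simp
qed

lemma nf_zero:
  fixes f :: "real \<Rightarrow> real"
  assumes "mono_on {0..} f" "\<And>x. x \<ge> 0 \<Longrightarrow> f x \<ge> 0" "x \<le> 0"
  shows "Nfun_of f x = 0"
proof (cases "x = 0")
  case True then show ?thesis using nf_upper[OF assms(1), of 0] nf_nonneg[OF assms(1,2), of 0] by simp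
next
  case False then show ?thesis using assms(3) unfolding Nfun_of_def by simp
qed

lemma nf_mono:
  fixes f :: "real \<Rightarrow> real"
  assumes "mono_on {0..} f" "\<And>x. x \<ge> 0 \<Longrightarrow> f x \<ge> 0" "x \<le> y"
  shows "Nfun_of f x \<le> Nfun_of f y"
proof (cases "x \<ge> 0")
  case True then show ?thesis using nf_split[OF assms(1) True assms(3)] nf_nonneg0[OF assms(1,2) True, of y] by linarith
next
  case False then show ?thesis using nf_zero[OF assms(1,2), of x] nf_nonneg[OF assms(1,2), of y] by simp
qed

lemma nf_scale:
  fixes f :: "real \<Rightarrow> real"
  assumes "mono_on {0..} f" "\<And>x. x \<ge> 0 \<Longrightarrow> f x \<ge> 0" "0 \<le> c" "c \<le> 1" "0 \<le> u"
  shows "Nfun_of f (c * u) \<le> c * Nfun_of f u"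
proof -
  have cu: "0 \<le> c * u" "c * u \<le> u" using assms by (auto simp: mult_left_le_one_le)
  have "integral {c*u..u} f \<ge> (u - c*u) * f (c*u)"
  proof -
    have "integral {c*u..u} (\<lambda>_. f (c*u)) \<le> integral {c*u..u} f"
    proof (rule integral_le)
      show "f integrable_on {c*u..u}" by (rule nf_int[OF assms(1) cu(1)])
      fix t assume "t \<in> {c*u..u}"
      then show "f (c*u) \<le> f t" using cu by (intro mono_onD[OF assms(1)]) auto
    qed (rule integrable_const_ivl)
    then show ?thesis using cu by simp
  qed
  moreover have "Nfun_of f (c*u) \<le> c*u * f (c*u)" by (rule nf_upper[OF assms(1) cu(1)])
  moreover have "f (c*u) \<ge> 0" using assms(2) cu by auto
  moreover have "Nfun_of f u = Nfun_of f (c*u) + integral {c*u..u} f" by (rule nf_split[OF assms(1) cu])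
  ultimately have A: "Nfun_of f u \<ge> Nfun_of f (c*u) + (1 - c) * u * f (c*u)" by (simp add: algebra_simps)
  have B: "(1 - c) * Nfun_of f (c*u) \<le> c * ((1 - c) * u * f (c*u))"
    using mult_left_mono[OF \<open>Nfun_of f (c*u) \<le> c*u * f (c*u)\<close>, of "1 - c"] assms(4) by (simp add: algebra_simps)
  have "c * Nfun_of f u \<ge> c * Nfun_of f (c*u) + c * ((1 - c) * u * f (c*u))"
    using mult_left_mono[OF A assms(3)] by (simp add: algebra_simps)
  then show ?thesis using B by (simp add: algebra_simps)
qed


lemma adm_mono: "admissible_density p \<Longrightarrow> mono_on {0..} p"
  unfolding admissible_density_def by auto

lemma adm_nonneg: "admissible_density p \<Longrightarrow> 0 \<le> t \<Longrightarrow> 0 \<le> p t"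
  unfolding admissible_density_def by (cases "t = 0") (auto simp: less_le)

lemma adm_big:
  assumes "admissible_density p"
  shows "\<exists>T. \<forall>t\<ge>T. s < p t"
proof -
  have "filterlim p at_top at_top" using assms unfolding admissible_density_def by auto
  then have "eventually (\<lambda>t. p t \<ge> s + 1) at_top" by (simp add: filterlim_at_top)
  then obtain T where "\<forall>t\<ge>T. p t \<ge> s + 1" by (auto simp: eventually_at_top_linorder)
  then show ?thesis by (intro exI[of _ T]) force
qed

lemma q_bdd:
  assumes "admissible_density p"
  shows "bdd_above {t. t \<ge> 0 \<and> p t \<le> s}"
proof -
  obtain T where T: "\<forall>t\<ge>T. s < p t" using adm_big[OF assms] by blast
  show ?thesis unfolding bdd_above_def
  proof (rule exI[of _ T], intro ballI)
    fix x assume "x \<in> {t. t \<ge> 0 \<and> p t \<le> s}"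
    then have "p x \<le> s" by simp
    then show "x \<le> T" using T by (meson linorder_not_le less_le_not_le order.strict_implies_order)
  qed
qed

lemma q_upper:
  assumes "admissible_density p" "0 \<le> t" "p t \<le> s"
  shows "t \<le> right_inverse p s"
  unfolding right_inverse_def by (rule cSup_upper) (use assms q_bdd[OF assms(1)] in auto)

lemma q_nonneg:
  assumes "admissible_density p" "0 \<le> s"
  shows "0 \<le> right_inverse p s"
  by (rule q_upper[OF assms(1)]) (use assms in \<open>auto simp: admissible_density_def\<close>)

lemma q_mono:
  assumes "admissible_density p"
  shows "mono_on {0..} (right_inverse p)"
proof (rule mono_onI)
  fix r s :: real assume "r \<in> {0..}" "s \<in> {0..}" "r \<le> s"
  then show "right_inverse p r \<le> right_inverse p s"
    unfolding right_inverse_def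
    by (intro cSup_subset_mono q_bdd[OF assms]) (use assms in \<open>auto simp: admissible_density_def\<close>)
qed

lemma young4:
  assumes "admissible_density p" "0 \<le> u" "0 \<le> v"
  shows "u * v \<le> 4 * (Nfun_of p u + Nfun_of (right_inverse p) v)"
proof -
  have mp: "mono_on {0..} p" by (rule adm_mono[OF assms(1)])
  have np: "\<And>x. x \<ge> 0 \<Longrightarrow> p x \<ge> 0" by (rule adm_nonneg[OF assms(1)])
  have mq: "mono_on {0..} (right_inverse p)" by (rule q_mono[OF assms(1)])
  have nq: "\<And>x. x \<ge> 0 \<Longrightarrow> right_inverse p x \<ge> 0" by (rule q_nonneg[OF assms(1)])
  have A: "(u - u/2) * p (u/2) \<le> Nfun_of p u" by (rule nf_lower[OF mp np]) (use assms in auto)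
  have B: "(v - v/2) * right_inverse p (v/2) \<le> Nfun_of (right_inverse p) v"
    by (rule nf_lower[OF mq nq]) (use assms in auto)
  have P0: "0 \<le> Nfun_of p u" by (rule nf_nonneg[OF mp np])
  have Q0: "0 \<le> Nfun_of (right_inverse p) v" by (rule nf_nonneg[OF mq nq])
  show ?thesis
  proof (cases "p (u/2) \<le> v/2")
    case True
    then have "u/2 \<le> right_inverse p (v/2)" by (intro q_upper[OF assms(1)]) (use assms in auto)
    then have "(v/2) * (u/2) \<le> (v/2) * right_inverse p (v/2)" using assms by (intro mult_left_mono) auto
    then show ?thesis using B P0 by (simp add: algebra_simps)
  next
    case False
    then have "(u/2) * (v/2) \<le> (u/2) * p (u/2)" using assms by (intro mult_left_mono) auto
    then show ?thesis using A Q0 by (simp add: algebra_simps)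
  qed
qed

lemma Psi_big:
  assumes "admissible_density p" "0 \<le> v" "Nfun_of (right_inverse p) v \<le> 1"
  shows "v \<le> max 2 (2 * p 1)"
proof (rule ccontr)
  assume "\<not> ?thesis"
  then have v: "v > 2" "v/2 \<ge> p 1" by auto
  have mq: "mono_on {0..} (right_inverse p)" by (rule q_mono[OF assms(1)])
  have nq: "\<And>x. x \<ge> 0 \<Longrightarrow> right_inverse p x \<ge> 0" by (rule q_nonneg[OF assms(1)])
  have B: "(v - v/2) * right_inverse p (v/2) \<le> Nfun_of (right_inverse p) v"
    by (rule nf_lower[OF mq nq]) (use assms in auto)
  have "1 \<le> right_inverse p (v/2)" by (rule q_upper[OF assms(1)]) (use v in auto)
  then have "(v/2) * 1 \<le> (v/2) * right_inverse p (v/2)" using v by (intro mult_left_mono) auto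
  moreover have "(v - v/2) * right_inverse p (v/2) = (v/2) * right_inverse p (v/2)" by simp
  ultimately show False using B v assms(3) by linarith
qed

lemma Psi_small:
  assumes "admissible_density p"
  shows "\<exists>v0>0. Nfun_of (right_inverse p) v0 \<le> 1"
proof -
  let ?q = "right_inverse p"
  have mq: "mono_on {0..} ?q" by (rule q_mono[OF assms(1)])
  have q1: "0 \<le> ?q 1" by (rule q_nonneg[OF assms]) simp
  define v0 where "v0 = 1 / (?q 1 + 1)"
  have v0: "0 < v0" "v0 \<le> 1" using q1 by (auto simp: v0_def field_simps)
  have "Nfun_of ?q v0 \<le> v0 * ?q v0" by (rule nf_upper[OF mq]) (use v0 in auto)
  also have "\<dots> \<le> v0 * ?q 1" using v0 by (intro mult_left_mono mono_onD[OF mq]) auto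
  also have "\<dots> \<le> 1" using q1 by (simp add: v0_def field_simps)
  finally show ?thesis using v0 by blast
qed


definition goodN :: "(real \<Rightarrow> real) \<Rightarrow> bool" where
  "goodN \<Theta> \<longleftrightarrow> \<Theta> 0 = 0 \<and> (\<forall>x. 0 \<le> \<Theta> x) \<and> (\<forall>x y. x \<le> y \<longrightarrow> \<Theta> x \<le> \<Theta> y) \<and>
     (\<forall>c u. 0 \<le> c \<longrightarrow> c \<le> 1 \<longrightarrow> 0 \<le> u \<longrightarrow> \<Theta> (c * u) \<le> c * \<Theta> u)"

lemma goodN_nf:
  fixes f :: "real \<Rightarrow> real"
  assumes "mono_on {0..} f" "\<And>x. x \<ge> 0 \<Longrightarrow> f x \<ge> 0"
  shows "goodN (Nfun_of f)"
  unfolding goodN_def using nf_zero[OF assms, of 0] nf_nonneg[OF assms] nf_mono[OF assms] nf_scale[OF assms]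
  by auto

definition OS :: "(real \<Rightarrow> real) \<Rightarrow> nat set \<Rightarrow> (nat \<Rightarrow> real) \<Rightarrow> (nat \<Rightarrow> complex) \<Rightarrow> real set" where
  "OS \<Theta> I w c = {r. r > 0 \<and> (\<lambda>k. \<Theta> (cmod (c k) * w k / r)) summable_on I \<and>
              (\<Sum>\<^sub>\<infinity>k\<in>I. \<Theta> (cmod (c k) * w k / r)) \<le> 1}"

lemma orlicz_norm_OS: "orlicz_norm \<Theta> I w c = Inf (OS \<Theta> I w c)"
  unfolding orlicz_norm_def OS_def by simp

lemma OS_nonempty:
  assumes g: "goodN \<Theta>" and w: "\<And>k. k \<in> I \<Longrightarrow> 0 \<le> w k" and os: "orlicz_space \<Theta> I w c"
  shows "\<exists>r. r \<in> OS \<Theta> I w c"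
proof -
  obtain r0 where r0: "r0 > 0" and sm: "(\<lambda>k. \<Theta> (cmod (c k) * w k / r0)) summable_on I"
    using os unfolding orlicz_space_def by blast
  define T where "T = (\<Sum>\<^sub>\<infinity>k\<in>I. \<Theta> (cmod (c k) * w k / r0))"
  define M where "M = max 1 T"
  have M: "M \<ge> 1" "T \<le> M" by (auto simp: M_def)
  define R where "R = r0 * M"
  have R: "R > 0" using r0 M by (simp add: R_def)
  have le: "\<Theta> (cmod (c k) * w k / R) \<le> (1/M) * \<Theta> (cmod (c k) * w k / r0)" if "k \<in> I" for k
  proof -
    have "cmod (c k) * w k / R = (1/M) * (cmod (c k) * w k / r0)" by (simp add: R_def)
    moreover have "0 \<le> cmod (c k) * w k / r0" using w[OF that] r0 by simp
    moreover have "0 \<le> 1/M" "1/M \<le> 1" using M by auto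
    ultimately show ?thesis using g unfolding goodN_def by metis
  qed
  have nn: "0 \<le> \<Theta> x" for x using g unfolding goodN_def by auto
  have sm2: "(\<lambda>k. (1/M) * \<Theta> (cmod (c k) * w k / r0)) summable_on I"
    by (rule summable_on_cmult_right[OF sm])
  have sm3: "(\<lambda>k. \<Theta> (cmod (c k) * w k / R)) summable_on I"
    by (rule summable_on_comparison_test[OF sm2]) (use le nn in auto)
  have "(\<Sum>\<^sub>\<infinity>k\<in>I. \<Theta> (cmod (c k) * w k / R)) \<le> (\<Sum>\<^sub>\<infinity>k\<in>I. (1/M) * \<Theta> (cmod (c k) * w k / r0))"
    by (rule infsum_mono[OF sm3 sm2 le])
  also have "\<dots> = (1/M) * T" unfolding T_def by (rule infsum_cmult_right[OF sm])
  also have "\<dots> \<le> 1" using M by (simp add: field_simps)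
  finally show ?thesis using R sm3 unfolding OS_def by blast
qed

lemma OS_pos: "r \<in> OS \<Theta> I w c \<Longrightarrow> r > 0" unfolding OS_def by auto

lemma norm_le_OS: "r \<in> OS \<Theta> I w c \<Longrightarrow> orlicz_norm \<Theta> I w c \<le> r"
  unfolding orlicz_norm_OS
  by (rule cInf_lower) (auto simp: bdd_below_def OS_def intro!: exI[of _ 0])

lemma norm_ge_OS: "r \<in> OS \<Theta> I w c \<Longrightarrow> (\<And>s. s \<in> OS \<Theta> I w c \<Longrightarrow> b \<le> s) \<Longrightarrow> b \<le> orlicz_norm \<Theta> I w c"
  unfolding orlicz_norm_OS by (rule cInf_greatest) auto

lemma norm_nonneg_OS: "r \<in> OS \<Theta> I w c \<Longrightarrow> 0 \<le> orlicz_norm \<Theta> I w c"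
  by (rule norm_ge_OS) (auto dest: OS_pos)

lemma orlicz_dom:
  assumes g: "goodN \<Theta>" and w: "\<And>k. k \<in> I \<Longrightarrow> 0 \<le> w k"
    and sm: "(\<lambda>k. \<Theta> (cmod (d k) * w k)) summable_on I"
    and le: "\<And>k. k \<in> I \<Longrightarrow> cmod (c k) \<le> cmod (d k)"
  shows "orlicz_space \<Theta> I w c"
  unfolding orlicz_space_def
proof (intro exI[of _ 1] conjI)
  show "(\<lambda>k. \<Theta> (cmod (c k) * w k / 1)) summable_on I"
  proof (rule summable_on_comparison_test[OF sm])
    fix k assume k: "k \<in> I"
    have "cmod (c k) * w k \<le> cmod (d k) * w k" using le[OF k] w[OF k] by (rule mult_right_mono)
    then show "\<Theta> (cmod (c k) * w k / 1) \<le> \<Theta> (cmod (d k) * w k)" using g unfolding goodN_def by simp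
    show "0 \<le> \<Theta> (cmod (c k) * w k / 1)" using g unfolding goodN_def by simp
  qed
qed simp

lemma single_le_infsum:
  fixes f :: "nat \<Rightarrow> real"
  assumes "f summable_on I" "\<And>k. k \<in> I \<Longrightarrow> 0 \<le> f k" "j \<in> I"
  shows "f j \<le> infsum f I"
proof -
  have "infsum f {j} \<le> infsum f I"
    by (rule infsum_mono_neutral) (use assms in auto)
  then show ?thesis by simp
qed

lemma shift_sum:
  fixes f h :: "nat \<Rightarrow> real"
  assumes f0: "\<And>i. 0 \<le> f i" and h0: "\<And>l. l \<in> A \<Longrightarrow> 0 \<le> h l" and hs: "h summable_on A"
    and le: "\<And>i. f i \<le> (if j \<le> i \<and> i - j \<in> A then h (i - j) else 0)"
  shows "f summable_on UNIV \<and> infsum f UNIV \<le> infsum h A"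
proof -
  define g where "g i = (if j \<le> i \<and> i - j \<in> A then h (i - j) else 0)" for i
  define B where "B = (\<lambda>l. l + j) ` A"
  have inj: "inj_on (\<lambda>l. l + j) A" by (auto simp: inj_on_def)
  have comp: "\<And>l. l \<in> A \<Longrightarrow> (g \<circ> (\<lambda>l. l + j)) l = h l" by (simp add: g_def)
  have gB: "g summable_on B" unfolding B_def summable_on_reindex[OF inj]
    using summable_on_cong[of A "g \<circ> (\<lambda>l. l + j)" h] comp hs by simp
  have gBv: "infsum g B = infsum h A" unfolding B_def infsum_reindex[OF inj]
    by (rule infsum_cong) (use comp in simp)
  have off: "\<And>i. i \<in> UNIV - B \<Longrightarrow> g i = 0"
  proof -
    fix i assume "i \<in> UNIV - B"
    then have "\<not> (j \<le> i \<and> i - j \<in> A)" unfolding B_def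
      by (metis DiffD2 image_eqI le_add_diff_inverse2)
    then show "g i = 0" unfolding g_def by meson
  qed
  have gU: "g summable_on UNIV" using gB summable_on_cong_neutral[of UNIV B g g] off by auto
  have gUv: "infsum g UNIV = infsum g B" using infsum_cong_neutral[of UNIV B g g] off by auto
  have g0: "\<And>i. 0 \<le> g i" using h0 by (simp add: g_def)
  have fs: "f summable_on UNIV" by (rule summable_on_comparison_test[OF gU]) (use le f0 in \<open>auto simp: g_def\<close>)
  have "infsum f UNIV \<le> infsum g UNIV" by (rule infsum_mono[OF fs gU]) (use le in \<open>simp add: g_def\<close>)
  then show ?thesis using fs gUv gBv by simp
qed

lemma single_supp:
  fixes g :: "nat \<Rightarrow> real"
  assumes "\<And>k. k \<noteq> j \<Longrightarrow> g k = 0"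
  shows "g summable_on UNIV \<and> infsum g UNIV = g j"
proof -
  have "g summable_on UNIV \<longleftrightarrow> g summable_on {j}" by (rule summable_on_cong_neutral) (use assms in auto)
  moreover have "infsum g UNIV = infsum g {j}" by (rule infsum_cong_neutral) (use assms in auto)
  ultimately show ?thesis by simp
qed


lemma OS_space: "r \<in> OS \<Theta> I w c \<Longrightarrow> orlicz_space \<Theta> I w c"
  unfolding OS_def orlicz_space_def by auto

lemma zero_orlicz:
  assumes g: "goodN \<Theta>"
  shows "orlicz_space \<Theta> I w (\<lambda>_. 0) \<and> orlicz_norm \<Theta> I w (\<lambda>_. 0) = 0"
proof -
  have "OS \<Theta> I w (\<lambda>_. 0) = {0<..}" using g unfolding OS_def goodN_def by auto
  moreover have "1 \<in> OS \<Theta> I w (\<lambda>_. 0) \<Longrightarrow> orlicz_space \<Theta> I w (\<lambda>_. 0)"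
    by (rule OS_space)
  ultimately show ?thesis unfolding orlicz_norm_OS by simp
qed


lemma Pn_apply: "Pn n c i = (if i \<le> n then c i else 0)" by (simp add: Pn_def)

lemma Qn_apply: "Qn n c i = (if i \<le> n then 0 else c i)" by (simp add: Qn_def Pn_def)

lemma Delta_apply: "Delta j c k = (if k = j then c k else 0)"
  by (cases "j = 0") (auto simp: Delta_def Pn_def)

lemma toeplitz_Delta: "toeplitz a (Delta j x) i = a (int i - int j) * x j"
proof -
  have "(\<lambda>k. a (int i - int k) * Delta j x k) = (\<lambda>k. if k = j then a (int i - int k) * x k else 0)"
    by (auto simp: Delta_apply)
  then show ?thesis unfolding toeplitz_def using sums_unique[OF sums_single[of j "\<lambda>k. a (int i - int k) * x k"]]
    by simp
qed


lemma coord_bound: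
  assumes gP: "goodN \<Psi>" and Mb: "\<And>v. 0 \<le> v \<Longrightarrow> \<Psi> v \<le> 1 \<Longrightarrow> v \<le> M" and M: "M > 0"
    and xs: "ellTheta \<Psi> x"
  shows "cmod (x j) \<le> M * ellTheta_norm \<Psi> x"
proof -
  obtain s0 where s0: "s0 \<in> OS \<Psi> UNIV (\<lambda>_. 1) x" using OS_nonempty[OF gP _ xs] by auto
  have "cmod (x j) / M \<le> ellTheta_norm \<Psi> x"
  proof (rule norm_ge_OS[OF s0])
    fix s assume s: "s \<in> OS \<Psi> UNIV (\<lambda>_. 1) x"
    then have sp: "s > 0" by (rule OS_pos)
    have "\<Psi> (cmod (x j) * 1 / s) \<le> (\<Sum>\<^sub>\<infinity>k\<in>UNIV. \<Psi> (cmod (x k) * 1 / s))"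
      by (rule single_le_infsum) (use s gP in \<open>auto simp: OS_def goodN_def\<close>)
    also have "\<dots> \<le> 1" using s by (simp add: OS_def)
    finally have "cmod (x j) / s \<le> M" using Mb[of "cmod (x j) / s"] sp by simp
    then show "cmod (x j) / M \<le> s" using sp M by (simp add: field_simps)
  qed
  then show ?thesis using M by (simp add: field_simps)
qed


lemma part1:
  fixes \<psi> :: "nat \<Rightarrow> real" and b a :: "int \<Rightarrow> complex"
  assumes gP: "goodN \<Psi>" and \<psi>pos: "\<And>k. \<psi> k > 0" and \<psi>mono: "mono \<psi>"
    and Mb: "\<And>v. 0 \<le> v \<Longrightarrow> \<Psi> v \<le> 1 \<Longrightarrow> v \<le> M" and M: "M > 0"
    and xs: "ellTheta \<Psi> x" and jn: "j \<le> n"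
    and Ds: "orlicz_space \<Psi> UNIV \<psi> (\<lambda>k. b (int k))"
    and bag: "\<And>k::nat. n - j < k \<Longrightarrow> b (int k) = a (int k)"
  shows "ellTheta \<Psi> (Qn n (toeplitz a (Delta j x))) \<and>
    ellTheta_norm \<Psi> (Qn n (toeplitz a (Delta j x)))
      \<le> M * ellTheta_norm \<Psi> x * orlicz_norm \<Psi> UNIV \<psi> (\<lambda>k. b (int k)) / \<psi> (n - j + 1)"
  (is "ellTheta \<Psi> ?y \<and> ?N \<le> M * ?B * ?D / ?w")
proof -
  have y: "?y i = (if i \<le> n then 0 else a (int i - int j) * x j)" for i
    by (simp add: Qn_apply toeplitz_Delta)
  have nn: "\<And>v. 0 \<le> \<Psi> v" and z: "\<Psi> 0 = 0" and mo: "\<And>u v. u \<le> v \<Longrightarrow> \<Psi> u \<le> \<Psi> v"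
    using gP unfolding goodN_def by auto
  obtain rD where rD: "rD \<in> OS \<Psi> UNIV \<psi> (\<lambda>k. b (int k))"
    using OS_nonempty[OF gP _ Ds] \<psi>pos less_imp_le by blast
  obtain s0 where s0: "s0 \<in> OS \<Psi> UNIV (\<lambda>_. 1) x" using OS_nonempty[OF gP _ xs] by auto
  have D0: "0 \<le> ?D" by (rule norm_nonneg_OS[OF rD])
  have B0: "0 \<le> ?B" by (rule norm_nonneg_OS[OF s0])
  have w0: "0 < ?w" by (rule \<psi>pos)
  have xj: "cmod (x j) \<le> M * ?B" by (rule coord_bound[OF gP Mb M xs])
  show ?thesis
  proof (cases "x j = 0")
    case True
    then have "?y = (\<lambda>_. 0)" by (auto simp: y)
    then show ?thesis using zero_orlicz[OF gP] M D0 B0 w0 by simp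
  next
    case False
    then have xj0: "cmod (x j) > 0" by simp
    have mem: "cmod (x j) * r / ?w \<in> OS \<Psi> UNIV (\<lambda>_. 1) ?y" if r: "r \<in> OS \<Psi> UNIV \<psi> (\<lambda>k. b (int k))" for r
    proof -
      have rp: "r > 0" by (rule OS_pos[OF r])
      let ?t = "cmod (x j) * r / ?w"
      have tp: "?t > 0" using rp xj0 w0 by simp
      have hs: "(\<lambda>l. \<Psi> (cmod (b (int l)) * \<psi> l / r)) summable_on UNIV"
        and hv: "(\<Sum>\<^sub>\<infinity>l\<in>UNIV. \<Psi> (cmod (b (int l)) * \<psi> l / r)) \<le> 1" using r by (auto simp: OS_def)
      have "(\<lambda>i. \<Psi> (cmod (?y i) * 1 / ?t)) summable_on UNIV \<and>
          infsum (\<lambda>i. \<Psi> (cmod (?y i) * 1 / ?t)) UNIV \<le> infsum (\<lambda>l. \<Psi> (cmod (b (int l)) * \<psi> l / r)) UNIV"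
      proof (rule shift_sum[where j = j])
        fix i
        show "\<Psi> (cmod (?y i) * 1 / ?t) \<le> (if j \<le> i \<and> i - j \<in> UNIV then \<Psi> (cmod (b (int (i - j))) * \<psi> (i - j) / r) else 0)"
        proof (cases "i \<le> n")
          case True then show ?thesis using z nn by (simp add: y)
        next
          case False
          then have ji: "j \<le> i" "n - j < i - j" using jn by auto
          have ba: "b (int (i - j)) = a (int i - int j)" using bag[OF ji(2)] ji(1) by (simp add: of_nat_diff)
          have wle: "?w \<le> \<psi> (i - j)" using ji by (intro monoD[OF \<psi>mono]) auto
          have "cmod (?y i) * 1 / ?t = cmod (a (int i - int j)) * ?w / r"
            using False xj0 rp w0 by (simp add: y norm_mult field_simps)
          also have "\<dots> \<le> cmod (a (int i - int j)) * \<psi> (i - j) / r"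
            using wle rp by (intro divide_right_mono mult_left_mono) auto
          finally show ?thesis using ji ba mo by simp
        qed
      qed (use nn hs in auto)
      then show ?thesis using tp hv unfolding OS_def by auto
    qed
    have sp: "ellTheta \<Psi> ?y" using OS_space[OF mem[OF rD]] .
    have "?N * ?w / cmod (x j) \<le> ?D"
    proof (rule norm_ge_OS[OF rD])
      fix r assume r: "r \<in> OS \<Psi> UNIV \<psi> (\<lambda>k. b (int k))"
      have "?N \<le> cmod (x j) * r / ?w" by (rule norm_le_OS[OF mem[OF r]])
      then show "?N * ?w / cmod (x j) \<le> r" using xj0 w0 by (simp add: field_simps)
    qed
    then have "?N \<le> cmod (x j) * ?D / ?w" using xj0 w0 by (simp add: field_simps)
    also have "\<dots> \<le> M * ?B * ?D / ?w" using xj D0 w0 by (intro divide_right_mono mult_right_mono) auto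
    finally show ?thesis using sp by simp
  qed
qed


lemma part2:
  fixes \<phi> :: "nat \<Rightarrow> real" and b a :: "int \<Rightarrow> complex"
  assumes gF: "goodN \<Phi>" and gP: "goodN \<Psi>" and \<phi>pos: "\<And>k. \<phi> k > 0" and \<phi>mono: "mono \<phi>"
    and young: "\<And>u v. 0 \<le> u \<Longrightarrow> 0 \<le> v \<Longrightarrow> u * v \<le> 4 * (\<Phi> u + \<Psi> v)"
    and v0: "v0 > 0" "\<Psi> v0 \<le> 1"
    and xs: "ellTheta \<Psi> x" and jn: "j \<le> n"
    and As: "orlicz_space \<Phi> {1..} \<phi> (\<lambda>k. b (- int k))"
    and bag: "\<And>k::nat. n - j < k \<Longrightarrow> b (- int k) = a (- int k)"
  shows "ellTheta \<Psi> (Delta j (toeplitz a (Qn n x))) \<and>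
    ellTheta_norm \<Psi> (Delta j (toeplitz a (Qn n x)))
      \<le> (8 / v0) * orlicz_norm \<Phi> {1..} \<phi> (\<lambda>k. b (- int k)) * ellTheta_norm \<Psi> x / \<phi> (n - j + 1)"
  (is "ellTheta \<Psi> ?y \<and> ?N \<le> (8 / v0) * ?A * ?B / ?w")
proof -
  define z where "z = toeplitz a (Qn n x) j"
  define t where "t k = a (int j - int k) * Qn n x k" for k
  have zt: "z = suminf t" unfolding z_def t_def toeplitz_def ..
  have y: "?y = (\<lambda>k. if k = j then z else 0)" by (auto simp: Delta_apply z_def)
  have nnP: "\<And>v. 0 \<le> \<Psi> v" and zP: "\<Psi> 0 = 0" and moP: "\<And>u v. u \<le> v \<Longrightarrow> \<Psi> u \<le> \<Psi> v"
    using gP unfolding goodN_def by auto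
  have nnF: "\<And>v. 0 \<le> \<Phi> v" using gF unfolding goodN_def by auto
  obtain rA where rA: "rA \<in> OS \<Phi> {1..} \<phi> (\<lambda>k. b (- int k))"
    using OS_nonempty[OF gF _ As] \<phi>pos less_imp_le by blast
  obtain s0 where s0: "s0 \<in> OS \<Psi> UNIV (\<lambda>_. 1) x" using OS_nonempty[OF gP _ xs] by auto
  have A0: "0 \<le> ?A" by (rule norm_nonneg_OS[OF rA])
  have B0: "0 \<le> ?B" by (rule norm_nonneg_OS[OF s0])
  have w0: "0 < ?w" by (rule \<phi>pos)
  have key: "cmod z \<le> 8 * r * s / ?w" if r: "r \<in> OS \<Phi> {1..} \<phi> (\<lambda>k. b (- int k))"
    and s: "s \<in> OS \<Psi> UNIV (\<lambda>_. 1) x" for r s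
  proof -
    have rp: "r > 0" by (rule OS_pos[OF r])
    have spos: "s > 0" by (rule OS_pos[OF s])
    define F where "F k = (if n < k then \<Phi> (cmod (b (- int (k - j))) * \<phi> (k - j) / r) else 0)" for k
    define G where "G k = \<Psi> (cmod (x k) * 1 / s)" for k
    define K where "K = 4 * r * s / ?w"
    have K0: "K > 0" using rp spos w0 by (simp add: K_def)
    have hs: "(\<lambda>l. \<Phi> (cmod (b (- int l)) * \<phi> l / r)) summable_on {1..}"
      and hv: "(\<Sum>\<^sub>\<infinity>l\<in>{1..}. \<Phi> (cmod (b (- int l)) * \<phi> l / r)) \<le> 1" using r by (auto simp: OS_def)
    have Fsv: "F summable_on UNIV \<and> infsum F UNIV \<le> infsum (\<lambda>l. \<Phi> (cmod (b (- int l)) * \<phi> l / r)) {1..}"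
    proof (rule shift_sum[where j = j])
      fix i show "F i \<le> (if j \<le> i \<and> i - j \<in> {1..} then \<Phi> (cmod (b (- int (i - j))) * \<phi> (i - j) / r) else 0)"
        using jn nnF by (auto simp: F_def)
    qed (use nnF hs in \<open>auto simp: F_def\<close>)
    have Gs: "G summable_on UNIV" and Gv: "infsum G UNIV \<le> 1" using s by (auto simp: OS_def G_def[abs_def])
    define g where "g k = K * (F k + G k)" for k
    have F0: "\<And>k. 0 \<le> F k" using nnF by (simp add: F_def)
    have G0: "\<And>k. 0 \<le> G k" using nnP by (simp add: G_def)
    have g0: "\<And>k. 0 \<le> g k" using F0 G0 K0 by (simp add: g_def)
    have gs: "g summable_on UNIV" unfolding g_def
      by (intro summable_on_cmult_right summable_on_add) (use Fsv Gs in auto)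
    have gv: "infsum g UNIV \<le> K * 2"
    proof -
      have "infsum g UNIV = K * (infsum F UNIV + infsum G UNIV)" unfolding g_def
        using infsum_cmult_right[of K "\<lambda>k. F k + G k" UNIV] infsum_add[of F UNIV G] Fsv Gs
          summable_on_add[of F UNIV G] by simp
      also have "\<dots> \<le> K * 2" using Fsv hv Gv K0 by (intro mult_left_mono) auto
      finally show ?thesis .
    qed
    have tb: "norm (t k) \<le> g k" for k
    proof (cases "k \<le> n")
      case True then show ?thesis using g0 by (simp add: t_def Qn_apply)
    next
      case False
      define l where "l = k - j"
      have l: "n - j < l" "1 \<le> l" "int j - int k = - int l" using False jn by (auto simp: l_def)
      have ba: "b (- int l) = a (int j - int k)" using bag[OF l(1)] l(3) by simp
      define u where "u = cmod (b (- int l)) * \<phi> l / r"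
      define v where "v = cmod (x k) / s"
      have uv0: "0 \<le> u" "0 \<le> v" using rp spos \<phi>pos[of l] by (auto simp: u_def v_def)
      have Fk: "F k = \<Phi> u" and Gk: "G k = \<Psi> v" using False by (auto simp: F_def G_def u_def v_def l_def)
      have wl: "?w \<le> \<phi> l" using l by (intro monoD[OF \<phi>mono]) auto
      have "norm (t k) = (u * v) * (r * s / \<phi> l)"
        using False rp spos \<phi>pos[of l] by (simp add: t_def Qn_apply norm_mult u_def v_def ba)
      also have "\<dots> \<le> (4 * (F k + G k)) * (r * s / \<phi> l)"
        using young[OF uv0] Fk Gk rp spos \<phi>pos[of l] by (intro mult_right_mono) auto
      also have "\<dots> \<le> (4 * (F k + G k)) * (r * s / ?w)"
        using F0[of k] G0[of k] rp spos w0 wl by (intro mult_left_mono divide_left_mono) auto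
      also have "\<dots> = g k" by (simp add: g_def K_def)
      finally show ?thesis .
    qed
    have gsum: "summable g" using gs summable_on_UNIV_nonneg_real_iff[of g] g0 by simp
    have tsum: "summable (\<lambda>k. norm (t k))"
      by (rule summable_comparison_test[OF _ gsum]) (use tb in auto)
    have "cmod z \<le> (\<Sum>k. norm (t k))" unfolding zt by (rule summable_norm[OF tsum])
    also have "\<dots> \<le> suminf g" by (rule suminf_le[OF tb tsum gsum])
    also have "suminf g = infsum g UNIV"
      using infsumI[OF sums_nonneg_imp_has_sum_strong[OF summable_sums[OF gsum]]] g0 by simp
    also have "\<dots> \<le> K * 2" by (rule gv)
    finally show ?thesis by (simp add: K_def)
  qed
  have zAB: "cmod z * ?w / 8 \<le> ?A * ?B"
  proof -
    have 1: "cmod z * ?w / 8 \<le> ?A * s" if s: "s \<in> OS \<Psi> UNIV (\<lambda>_. 1) x" for s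
    proof -
      have spos: "s > 0" by (rule OS_pos[OF s])
      have "cmod z * ?w / 8 / s \<le> ?A"
      proof (rule norm_ge_OS[OF rA])
        fix r assume r: "r \<in> OS \<Phi> {1..} \<phi> (\<lambda>k. b (- int k))"
        show "cmod z * ?w / 8 / s \<le> r" using key[OF r s] spos w0 by (simp add: field_simps)
      qed
      then show ?thesis using spos by (simp add: field_simps)
    qed
    show ?thesis
    proof (cases "?A = 0")
      case True then show ?thesis using 1[OF s0] by simp
    next
      case False
      then have Ap: "?A > 0" using A0 by simp
      have "cmod z * ?w / 8 / ?A \<le> ?B"
      proof (rule norm_ge_OS[OF s0])
        fix s assume s: "s \<in> OS \<Psi> UNIV (\<lambda>_. 1) x"
        show "cmod z * ?w / 8 / ?A \<le> s" using 1[OF s] Ap by (simp add: field_simps)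
      qed
      then show ?thesis using Ap by (simp add: field_simps)
    qed
  qed
  show ?thesis
  proof (cases "z = 0")
    case True
    then have "?y = (\<lambda>_. 0)" by (auto simp: y)
    then show ?thesis using zero_orlicz[OF gP] v0 A0 B0 w0 by simp
  next
    case False
    let ?tt = "cmod z / v0"
    have ttp: "?tt > 0" using False v0 by simp
    have "(\<lambda>k. \<Psi> (cmod (?y k) * 1 / ?tt)) summable_on UNIV \<and>
        infsum (\<lambda>k. \<Psi> (cmod (?y k) * 1 / ?tt)) UNIV = \<Psi> (cmod (?y j) * 1 / ?tt)"
      by (rule single_supp) (simp add: y zP)
    moreover have "\<Psi> (cmod (?y j) * 1 / ?tt) = \<Psi> v0" using False v0 by (simp add: y)
    ultimately have mem: "?tt \<in> OS \<Psi> UNIV (\<lambda>_. 1) ?y" using ttp v0 unfolding OS_def by auto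
    have "?N \<le> ?tt" by (rule norm_le_OS[OF mem])
    also have "\<dots> \<le> (8 / v0) * ?A * ?B / ?w" using zAB v0 w0 by (simp add: field_simps)
    finally show ?thesis using OS_space[OF mem] by simp
  qed
qed


lemma final_ineq:
  fixes M C D F B w :: real
  assumes "0 \<le> M" "M \<le> C" "0 \<le> D" "D \<le> F" "0 \<le> B" "0 < w"
  shows "M * B * D / w \<le> C * (F / w) * B"
proof -
  have "M * D \<le> C * F" using assms by (intro mult_mono) auto
  then have "(M * D) * (B / w) \<le> (C * F) * (B / w)" using assms by (intro mult_right_mono) auto
  then show ?thesis by (simp add: field_simps)
qed

theorem lemma3p6:
  fixes \<Phi> \<Psi> :: "real \<Rightarrow> real" and \<phi> \<psi> :: "nat \<Rightarrow> real"
  assumes "complementary_Nfunctions \<Phi> \<Psi>"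
    and "Delta2_zero \<Phi>" and "Delta2_zero \<Psi>"
    and "weight_class \<phi>" and "weight_class \<psi>"
  shows "\<exists>C>0. \<forall>a n j. wiener a \<and> Fl_space \<Phi> \<Psi> \<phi> \<psi> a \<and> n \<ge> 1 \<and> j \<le> n \<longrightarrow>
     (\<forall>x. ellTheta \<Psi> x \<longrightarrow>
        ellTheta \<Psi> (Qn n (toeplitz a (Delta j x))) \<and>
        ellTheta_norm \<Psi> (Qn n (toeplitz a (Delta j x)))
          \<le> C * (Fl_norm \<Phi> \<Psi> \<phi> \<psi> (a - trunc_symbol (n - j) a) / \<psi> (n - j + 1))
             * ellTheta_norm \<Psi> x \<and>
        ellTheta \<Psi> (Delta j (toeplitz a (Qn n x))) \<and>
        ellTheta_norm \<Psi> (Delta j (toeplitz a (Qn n x)))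
          \<le> C * (Fl_norm \<Phi> \<Psi> \<phi> \<psi> (a - trunc_symbol (n - j) a) / \<phi> (n - j + 1))
             * ellTheta_norm \<Psi> x)"
proof -
  obtain p where adm: "admissible_density p" and PhiD: "\<Phi> = Nfun_of p"
    and PsiD: "\<Psi> = Nfun_of (right_inverse p)"
    using assms(1) unfolding complementary_Nfunctions_def by blast
  have gF: "goodN \<Phi>" unfolding PhiD by (rule goodN_nf[OF adm_mono[OF adm] adm_nonneg[OF adm]])
  have gP: "goodN \<Psi>" unfolding PsiD by (rule goodN_nf[OF q_mono[OF adm] q_nonneg[OF adm]])
  define M where "M = max 2 (2 * p 1)"
  have M: "M > 0" by (simp add: M_def)
  have Mb: "\<And>v. 0 \<le> v \<Longrightarrow> \<Psi> v \<le> 1 \<Longrightarrow> v \<le> M" unfolding M_def PsiD by (rule Psi_big[OF adm])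
  obtain v0 where v0: "v0 > 0" "\<Psi> v0 \<le> 1" using Psi_small[OF adm] unfolding PsiD by blast
  have young: "\<And>u v. 0 \<le> u \<Longrightarrow> 0 \<le> v \<Longrightarrow> u * v \<le> 4 * (\<Phi> u + \<Psi> v)"
    unfolding PhiD PsiD by (rule young4[OF adm])
  have \<phi>pos: "\<And>k. \<phi> k > 0" and \<phi>mono: "mono \<phi>" using assms(4) unfolding weight_class_def by auto
  have \<psi>pos: "\<And>k. \<psi> k > 0" and \<psi>mono: "mono \<psi>" using assms(5) unfolding weight_class_def by auto
  define C where "C = M + 8 / v0"
  have "8 / v0 > 0" using v0 by simp
  then have C: "C > 0" "M \<le> C" "8 / v0 \<le> C" using M unfolding C_def by (linarith, linarith, linarith)
  show ?thesis
  proof (rule exI[of _ C], rule conjI[OF C(1)], intro allI impI)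
    fix a :: "int \<Rightarrow> complex" and n j :: nat and x :: "nat \<Rightarrow> complex"
    assume H: "wiener a \<and> Fl_space \<Phi> \<Psi> \<phi> \<psi> a \<and> n \<ge> 1 \<and> j \<le> n" and xs: "ellTheta \<Psi> x"
    then have jn: "j \<le> n" and Fs: "Fl_space \<Phi> \<Psi> \<phi> \<psi> a" by auto
    define b where "b = a - trunc_symbol (n - j) a"
    have bp: "\<And>k::nat. n - j < k \<Longrightarrow> b (int k) = a (int k)" by (simp add: b_def trunc_symbol_def)
    have bm: "\<And>k::nat. n - j < k \<Longrightarrow> b (- int k) = a (- int k)" by (simp add: b_def trunc_symbol_def)
    have ble: "\<And>k. cmod (b k) \<le> cmod (a k)" by (simp add: b_def trunc_symbol_def)
    have Ds: "orlicz_space \<Psi> UNIV \<psi> (\<lambda>k. b (int k))"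
      by (rule orlicz_dom[OF gP, where d = "\<lambda>k. a (int k)"]) (use Fs \<psi>pos less_imp_le ble in \<open>auto simp: Fl_space_def\<close>)
    have As: "orlicz_space \<Phi> {1..} \<phi> (\<lambda>k. b (- int k))"
      by (rule orlicz_dom[OF gF, where d = "\<lambda>k. a (- int k)"]) (use Fs \<phi>pos less_imp_le ble in \<open>auto simp: Fl_space_def\<close>)
    let ?A = "orlicz_norm \<Phi> {1..} \<phi> (\<lambda>k. b (- int k))"
    let ?D = "orlicz_norm \<Psi> UNIV \<psi> (\<lambda>k. b (int k))"
    let ?B = "ellTheta_norm \<Psi> x"
    have Fl: "Fl_norm \<Phi> \<Psi> \<phi> \<psi> (a - trunc_symbol (n - j) a) = ?A + ?D"
      unfolding Fl_norm_def b_def ..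
    obtain rA where "rA \<in> OS \<Phi> {1..} \<phi> (\<lambda>k. b (- int k))"
      using OS_nonempty[OF gF _ As] \<phi>pos less_imp_le by blast
    then have A0: "0 \<le> ?A" by (rule norm_nonneg_OS)
    obtain rD where "rD \<in> OS \<Psi> UNIV \<psi> (\<lambda>k. b (int k))"
      using OS_nonempty[OF gP _ Ds] \<psi>pos less_imp_le by blast
    then have D0: "0 \<le> ?D" by (rule norm_nonneg_OS)
    obtain s0 where "s0 \<in> OS \<Psi> UNIV (\<lambda>_. 1) x" using OS_nonempty[OF gP _ xs] by auto
    then have B0: "0 \<le> ?B" by (rule norm_nonneg_OS)
    note P1 = part1[OF gP \<psi>pos \<psi>mono Mb M xs jn Ds bp]
    note P2 = part2[OF gF gP \<phi>pos \<phi>mono young v0 xs jn As bm]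
    have I1: "M * ?B * ?D / \<psi> (n - j + 1) \<le> C * ((?A + ?D) / \<psi> (n - j + 1)) * ?B"
      by (rule final_ineq) (use M C A0 D0 B0 \<psi>pos in auto)
    have I2: "(8 / v0) * ?A * ?B / \<phi> (n - j + 1) \<le> C * ((?A + ?D) / \<phi> (n - j + 1)) * ?B"
      using final_ineq[of "8 / v0" C ?A "?A + ?D" ?B "\<phi> (n - j + 1)"] v0 C A0 D0 B0 \<phi>pos
      by (simp add: field_simps)
    show "ellTheta \<Psi> (Qn n (toeplitz a (Delta j x))) \<and>
        ellTheta_norm \<Psi> (Qn n (toeplitz a (Delta j x)))
          \<le> C * (Fl_norm \<Phi> \<Psi> \<phi> \<psi> (a - trunc_symbol (n - j) a) / \<psi> (n - j + 1))
             * ellTheta_norm \<Psi> x \<and>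
        ellTheta \<Psi> (Delta j (toeplitz a (Qn n x))) \<and>
        ellTheta_norm \<Psi> (Delta j (toeplitz a (Qn n x)))
          \<le> C * (Fl_norm \<Phi> \<Psi> \<phi> \<psi> (a - trunc_symbol (n - j) a) / \<phi> (n - j + 1))
             * ellTheta_norm \<Psi> x"
      unfolding Fl using P1 P2 I1 I2 by linarith
  qed
qed

end
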